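(* Let $\mathcal{X} \subseteq \mathbb{R}^m$ be countable with ground metric $d$, and let $\widehat\nu = \sum_{j=1}^N \widehat\nu_j \delta_{\widehat x_j}$ be a probability mass function supported on $N$ distinct points $\widehat x_1,\dots,\widehat x_N \in \mathcal{X}$ with $\widehat\nu_j > 0$ and $\sum_j \widehat\nu_j = 1$. For $\varepsilon \ge 0$ let $\mathbb{B}_{\mathbb{W}}(\widehat\nu,\varepsilon) = \{\nu \in \mathcal{M}(\mathcal{X}) : \mathbb{W}(\nu,\widehat\nu) \le \varepsilon\}$. Then for any $\varepsilon \ge 0$ and $x \in \mathcal{X}$ there exists $\nu^\star_{\mathbb{W}} \in \mathbb{B}_{\mathbb{W}}(\widehat\nu,\varepsilon)$ with $$\sup_{\nu \in \mathbb{B}_{\mathbb{W}}(\widehat\nu,\varepsilon)} \nu(x) = \nu^\star_{\mathbb{W}}(x).$$ Furthermore, $\nu^\star_{\mathbb{W}}$ is supported on at most $N+1$ points and satisfies $\mathrm{supp}(\nu^\star_{\mathbb{W}}) \subseteq \mathrm{supp}(\widehat\nu) \cup \{x\}$.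
   Context: $\mathcal{M}(\mathcal{X})$ is the set of probability mass functions supported on $\mathcal{X}$. The type-1 Wasserstein distance between $\nu_1,\nu_2 \in \mathcal{M}(\mathcal{X})$ is $\mathbb{W}(\nu_1,\nu_2) = \inf_{\lambda \in \Lambda(\nu_1,\nu_2)} \mathbb{E}_\lambda[d(x_1,x_2)]$, where $\Lambda(\nu_1,\nu_2)$ is the set of distributions on $\mathcal{X}\times\mathcal{X}$ with marginals $\nu_1$ and $\nu_2$, and $d$ is the ground metric on $\mathcal{X}$. *)

theory Defs
  imports "HOL-Analysis.Analysis" "HOL-Probability.Probability"
begin

definition metric_on :: "'a set \<Rightarrow> ('a \<Rightarrow> 'a \<Rightarrow> real) \<Rightarrow> bool" where
  "metric_on X d \<longleftrightarrow>
     (\<forall>x\<in>X. \<forall>y\<in>X. d x y \<ge> 0 \<and> (d x y = 0 \<longleftrightarrow> x = y) \<and> d x y = d y x) \<and>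
     (\<forall>x\<in>X. \<forall>y\<in>X. \<forall>z\<in>X. d x z \<le> d x y + d y z)"

definition pmfs_on :: "'a set \<Rightarrow> 'a pmf set" where
  "pmfs_on X = {\<nu>. set_pmf \<nu> \<subseteq> X}"

definition couplings :: "'a pmf \<Rightarrow> 'a pmf \<Rightarrow> ('a \<times> 'a) pmf set" where
  "couplings \<nu>1 \<nu>2 = {\<gamma>. map_pmf fst \<gamma> = \<nu>1 \<and> map_pmf snd \<gamma> = \<nu>2}"

definition wasserstein :: "('a \<Rightarrow> 'a \<Rightarrow> real) \<Rightarrow> 'a pmf \<Rightarrow> 'a pmf \<Rightarrow> ennreal" where
  "wasserstein d \<nu>1 \<nu>2 =
     (INF \<gamma>\<in>couplings \<nu>1 \<nu>2. \<integral>\<^sup>+ p. ennreal (d (fst p) (snd p)) \<partial>measure_pmf \<gamma>)"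

definition wball :: "'a set \<Rightarrow> ('a \<Rightarrow> 'a \<Rightarrow> real) \<Rightarrow> 'a pmf \<Rightarrow> real \<Rightarrow> 'a pmf set" where
  "wball X d \<nu>hat \<epsilon> = {\<nu> \<in> pmfs_on X. wasserstein d \<nu> \<nu>hat \<le> ennreal \<epsilon>}"

end

theory Submission
  imports Defs
begin


definition feas :: "'a set \<Rightarrow> ('a \<Rightarrow> real) \<Rightarrow> ('a \<Rightarrow> real) \<Rightarrow> real \<Rightarrow> ('a \<Rightarrow> real) \<Rightarrow> bool" where
  "feas S w D e t \<longleftrightarrow> (\<forall>y\<in>S. 0 \<le> t y \<and> t y \<le> w y) \<and> (\<Sum>y\<in>S. t y * D y) \<le> e"

lemma sum_le_cost:
  fixes s D :: "'a \<Rightarrow> real"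
  assumes "finite S" "\<forall>y\<in>S. 0 \<le> s y" "\<forall>y\<in>S. c \<le> D y" "c > 0"
  shows "(\<Sum>y\<in>S. s y) \<le> (\<Sum>y\<in>S. s y * D y) / c"
proof -
  have "(\<Sum>y\<in>S. s y * c) = sum s S * c" by (rule sum_distrib_right[symmetric])
  hence "(\<Sum>y\<in>S. s y) = (\<Sum>y\<in>S. s y * c) / c" using assms(4) by simp
  also have "\<dots> \<le> (\<Sum>y\<in>S. s y * D y) / c"
    using assms by (intro divide_right_mono sum_mono mult_left_mono) auto
  finally show ?thesis .
qed

lemma lp_opt:
  assumes "finite S"
  shows "(\<forall>y\<in>S. 0 \<le> w y) \<Longrightarrow> (\<forall>y\<in>S. 0 \<le> D y) \<Longrightarrow> 0 \<le> e \<Longrightarrow>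
    \<exists>t. feas S w D e t \<and> (\<forall>s. feas S w D e s \<longrightarrow> (\<Sum>y\<in>S. s y) \<le> (\<Sum>y\<in>S. t y))"
  using assms
proof (induction S arbitrary: e rule: finite_remove_induct)
  case empty
  show ?case by (rule exI[of _ "\<lambda>_. 0"]) (simp add: feas_def empty.prems)
next
  case (remove S)
  have ne: "D ` S \<noteq> {}" using remove.hyps(2) by simp
  have finD: "finite (D ` S)" using remove.hyps(1) by simp
  have "Min (D ` S) \<in> D ` S" using Min_in[OF finD ne] .
  then obtain a where a1: "a \<in> S" and a2: "Min (D ` S) = D a" by blast
  have a3: "\<forall>y\<in>S. D a \<le> D y"
  proof
    fix y assume "y \<in> S"
    hence "Min (D ` S) \<le> D y" by (intro Min_le finD imageI)
    thus "D a \<le> D y" using a2 by simp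
  qed
  note a = a1 a3
  let ?S' = "S - {a}"
  have fin': "finite ?S'" using remove.hyps by auto
  have split: "\<And>f. sum f S = f a + sum f ?S'" using a(1) remove.hyps(1) by (simp add: sum.remove)
  have nnS': "\<forall>y\<in>?S'. 0 \<le> w y" "\<forall>y\<in>?S'. 0 \<le> D y" using remove.prems by auto
  show ?case
  proof (cases "D a = 0")
    case True
    obtain t' where t': "feas ?S' w D e t'" "\<forall>s. feas ?S' w D e s \<longrightarrow> (\<Sum>y\<in>?S'. s y) \<le> (\<Sum>y\<in>?S'. t' y)"
      using remove.IH[OF a(1) nnS' remove.prems(3)] by blast
    define t where "t = t'(a := w a)"
    have eq: "\<And>f. (\<Sum>y\<in>?S'. f (t y)) = (\<Sum>y\<in>?S'. f (t' y))" unfolding t_def by (intro sum.cong) auto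
    have eq2: "(\<Sum>y\<in>?S'. t y * D y) = (\<Sum>y\<in>?S'. t' y * D y)" unfolding t_def by (intro sum.cong) auto
    have "feas S w D e t"
      using t'(1) remove.prems True unfolding feas_def split[of "\<lambda>y. t y * D y"] eq2
      by (auto simp: t_def a)
    moreover have "(\<Sum>y\<in>S. s y) \<le> (\<Sum>y\<in>S. t y)" if s: "feas S w D e s" for s
    proof -
      have "(\<Sum>y\<in>?S'. s y * D y) \<le> e"
        using s True unfolding feas_def split[of "\<lambda>y. s y * D y"] by auto
      hence "feas ?S' w D e s" using s unfolding feas_def by auto
      hence "(\<Sum>y\<in>?S'. s y) \<le> (\<Sum>y\<in>?S'. t' y)" using t'(2) by blast
      moreover have "s a \<le> w a" using s a(1) unfolding feas_def by auto
      ultimately show ?thesis unfolding split[of s] split[of t] using eq[of "\<lambda>x. x"]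
        by (simp add: t_def)
    qed
    ultimately show ?thesis by blast
  next
    case False
    hence Dpos: "D a > 0" using remove.prems(2) a(1) by force
    show ?thesis
    proof (cases "e \<le> w a * D a")
      case True
      define t where "t = (\<lambda>y. if y = a then e / D a else 0)"
      have "feas S w D e t"
        unfolding feas_def
      proof (intro conjI ballI)
        fix y assume "y \<in> S"
        show "0 \<le> t y" "t y \<le> w y" unfolding t_def using True Dpos remove.prems(1,3) \<open>y \<in> S\<close>
          by (auto simp: pos_divide_le_eq mult.commute)
      next
        have "(\<Sum>y\<in>S. t y * D y) = (\<Sum>y\<in>S. if y = a then e else 0)"
          unfolding t_def using Dpos by (intro sum.cong) auto
        also have "\<dots> = e" using a(1) remove.hyps(1) by (simp add: sum.delta')
        finally show "(\<Sum>y\<in>S. t y * D y) \<le> e" by simp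
      qed
      moreover have "(\<Sum>y\<in>S. s y) \<le> (\<Sum>y\<in>S. t y)" if s: "feas S w D e s" for s
      proof -
        have "(\<Sum>y\<in>S. s y) \<le> (\<Sum>y\<in>S. s y * D y) / D a"
          using s a Dpos remove.hyps(1) unfolding feas_def by (intro sum_le_cost) auto
        also have "\<dots> \<le> e / D a" using s Dpos unfolding feas_def by (intro divide_right_mono) auto
        finally show ?thesis unfolding t_def using a(1) remove.hyps(1) by (simp add: sum.delta')
      qed
      ultimately show ?thesis by blast
    next
      case False
      define e' where "e' = e - w a * D a"
      have e'0: "0 \<le> e'" using False e'_def by simp
      obtain t' where t': "feas ?S' w D e' t'" "\<forall>s. feas ?S' w D e' s \<longrightarrow> (\<Sum>y\<in>?S'. s y) \<le> (\<Sum>y\<in>?S'. t' y)"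
        using remove.IH[OF a(1) nnS' e'0] by blast
      define t where "t = t'(a := w a)"
      have eq: "\<And>f. (\<Sum>y\<in>?S'. f (t y)) = (\<Sum>y\<in>?S'. f (t' y))" unfolding t_def by (intro sum.cong) auto
      have eq2: "(\<Sum>y\<in>?S'. t y * D y) = (\<Sum>y\<in>?S'. t' y * D y)" unfolding t_def by (intro sum.cong) auto
      have "feas S w D e t"
        using t'(1) remove.prems unfolding feas_def split[of "\<lambda>y. t y * D y"] eq2
        by (auto simp: t_def a e'_def)
      moreover have "(\<Sum>y\<in>S. s y) \<le> (\<Sum>y\<in>S. t y)" if s: "feas S w D e s" for s
      proof -
        define C where "C = (\<Sum>y\<in>?S'. s y * D y)"
        have sa: "0 \<le> s a" "s a \<le> w a" using s a(1) unfolding feas_def by auto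
        have Ce: "s a * D a + C \<le> e" using s unfolding feas_def split[of "\<lambda>y. s y * D y"] C_def by auto
        have sS': "\<forall>y\<in>?S'. 0 \<le> s y \<and> s y \<le> w y" using s unfolding feas_def by auto
        have bnd: "(\<Sum>y\<in>?S'. s y) \<le> (\<Sum>y\<in>?S'. t' y) + (w a - s a)"
        proof (cases "C \<le> e'")
          case True
          hence "feas ?S' w D e' s" using sS' unfolding feas_def C_def by auto
          thus ?thesis using t'(2) sa by fastforce
        next
          case False
          hence Cpos: "C > 0" using e'0 by linarith
          define \<mu> where "\<mu> = e' / C"
          have mu: "0 \<le> \<mu>" "\<mu> \<le> 1" using Cpos False e'0 unfolding \<mu>_def by auto
          have "feas ?S' w D e' (\<lambda>y. \<mu> * s y)"
            unfolding feas_def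
          proof (intro conjI ballI)
            fix y assume "y \<in> ?S'"
            thus "0 \<le> \<mu> * s y" "\<mu> * s y \<le> w y" using sS' mu
              by (auto intro: order_trans[OF mult_left_le_one_le])
          next
            have "(\<Sum>y\<in>?S'. \<mu> * s y * D y) = \<mu> * C" unfolding C_def
              by (simp add: sum_distrib_left mult.assoc)
            also have "\<dots> = e'" using Cpos unfolding \<mu>_def by simp
            finally show "(\<Sum>y\<in>?S'. \<mu> * s y * D y) \<le> e'" by simp
          qed
          hence h1: "\<mu> * (\<Sum>y\<in>?S'. s y) \<le> (\<Sum>y\<in>?S'. t' y)" using t'(2) by (simp add: sum_distrib_left)
          have h2: "(\<Sum>y\<in>?S'. s y) \<le> C / D a"
            unfolding C_def using sS' a Dpos fin' by (intro sum_le_cost) auto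
          have h3: "(1 - \<mu>) * C = C - e'" using Cpos unfolding \<mu>_def by (simp add: algebra_simps)
          have "(\<Sum>y\<in>?S'. s y) = \<mu> * (\<Sum>y\<in>?S'. s y) + (1 - \<mu>) * (\<Sum>y\<in>?S'. s y)" by (simp add: algebra_simps)
          also have "\<dots> \<le> (\<Sum>y\<in>?S'. t' y) + (1 - \<mu>) * (C / D a)"
            using h1 h2 mu by (intro add_mono mult_left_mono) auto
          also have "(1 - \<mu>) * (C / D a) = (C - e') / D a" using h3 by (simp add: field_simps)
          also have "\<dots> \<le> (w a - s a)"
          proof -
            have "C - e' \<le> (w a - s a) * D a" using Ce unfolding e'_def by (simp add: algebra_simps)
            thus ?thesis using Dpos by (simp add: pos_divide_le_eq)
          qed
          finally show ?thesis by simp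
        qed
        show ?thesis unfolding split[of s] split[of t] using bnd eq[of "\<lambda>x. x"]
          by (simp add: t_def)
      qed
      ultimately show ?thesis by blast
    qed
  qed
qed



lemma coupling_mass:
  assumes m1: "map_pmf fst \<gamma> = \<nu>" and m2: "map_pmf snd \<gamma> = \<nu>h" and fin: "finite (set_pmf \<nu>h)"
  shows "pmf \<nu> x = (\<Sum>y\<in>set_pmf \<nu>h. pmf \<gamma> (x, y))"
proof -
  let ?S = "set_pmf \<nu>h"
  have sub: "snd p \<in> ?S" if "p \<in> set_pmf \<gamma>" for p using that m2[symmetric] by auto
  have "pmf \<nu> x = measure \<gamma> (fst -` {x})" using m1 pmf_map by metis
  also have "\<dots> = measure \<gamma> (fst -` {x} \<inter> set_pmf \<gamma>)" by (simp add: measure_Int_set_pmf)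
  also have "fst -` {x} \<inter> set_pmf \<gamma> = Pair x ` ?S \<inter> set_pmf \<gamma>"
    using sub by force
  also have "measure \<gamma> \<dots> = measure \<gamma> (Pair x ` ?S)" by (simp add: measure_Int_set_pmf)
  also have "\<dots> = sum (pmf \<gamma>) (Pair x ` ?S)" using fin by (simp add: measure_measure_pmf_finite)
  also have "\<dots> = (\<Sum>y\<in>?S. pmf \<gamma> (x, y))" by (subst sum.reindex) (auto simp: inj_on_def)
  finally show ?thesis .
qed

lemma coupling_le:
  assumes m2: "map_pmf snd \<gamma> = \<nu>h"
  shows "pmf \<gamma> (x, y) \<le> pmf \<nu>h y"
proof -
  have "pmf \<gamma> (x, y) = measure \<gamma> {(x, y)}" by (simp add: measure_pmf_single)
  also have "\<dots> \<le> measure \<gamma> (snd -` {y})" by (intro measure_pmf.finite_measure_mono) auto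
  also have "\<dots> = pmf \<nu>h y" using m2 pmf_map by metis
  finally show ?thesis .
qed

lemma coupling_cost:
  fixes c :: "'a \<Rightarrow> 'a \<Rightarrow> real"
  assumes fin: "finite S"
  shows "(\<Sum>y\<in>S. ennreal (c x y) * ennreal (pmf \<gamma> (x, y))) \<le> (\<integral>\<^sup>+ p. ennreal (c (fst p) (snd p)) \<partial>measure_pmf \<gamma>)"
proof -
  let ?A = "Pair x ` S"
  have "(\<integral>\<^sup>+ p. ennreal (c (fst p) (snd p)) * indicator ?A p \<partial>measure_pmf \<gamma>)
      = (\<Sum>p\<in>?A. ennreal (c (fst p) (snd p)) * indicator ?A p * pmf \<gamma> p)"
    using fin by (intro nn_integral_measure_pmf_support) auto
  also have "\<dots> = (\<Sum>p\<in>?A. ennreal (c (fst p) (snd p)) * pmf \<gamma> p)"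
    by (intro sum.cong) auto
  also have "\<dots> = (\<Sum>y\<in>S. ennreal (c x y) * ennreal (pmf \<gamma> (x, y)))"
    by (subst sum.reindex) (auto simp: inj_on_def)
  finally have eq: "(\<integral>\<^sup>+ p. ennreal (c (fst p) (snd p)) * indicator ?A p \<partial>measure_pmf \<gamma>)
      = (\<Sum>y\<in>S. ennreal (c x y) * ennreal (pmf \<gamma> (x, y)))" .
  have "(\<integral>\<^sup>+ p. ennreal (c (fst p) (snd p)) * indicator ?A p \<partial>measure_pmf \<gamma>)
      \<le> (\<integral>\<^sup>+ p. ennreal (c (fst p) (snd p)) \<partial>measure_pmf \<gamma>)"
    by (intro nn_integral_mono) (auto split: split_indicator)
  thus ?thesis using eq by simp
qed

theorem mainTheorem4:
  fixes X :: "(real ^ 'm) set" and d :: "real ^ 'm \<Rightarrow> real ^ 'm \<Rightarrow> real"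
    and \<nu>hat :: "(real ^ 'm) pmf" and N :: nat and \<epsilon> :: real and x :: "real ^ 'm"
  assumes "countable X"
    and "metric_on X d"
    and "\<nu>hat \<in> pmfs_on X"
    and "finite (set_pmf \<nu>hat)" and "card (set_pmf \<nu>hat) = N"
    and "\<epsilon> \<ge> 0"
    and "x \<in> X"
  shows "\<exists>\<nu>s \<in> wball X d \<nu>hat \<epsilon>.
           (SUP \<nu>\<in>wball X d \<nu>hat \<epsilon>. pmf \<nu> x) = pmf \<nu>s x \<and>
           card (set_pmf \<nu>s) \<le> N + 1 \<and>
           set_pmf \<nu>s \<subseteq> set_pmf \<nu>hat \<union> {x}"
proof -
  note met = assms(2)[unfolded metric_on_def]
  define S where "S = set_pmf \<nu>hat"
  define w where "w = pmf \<nu>hat"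
  define D where "D = (\<lambda>y. d x y)"
  have finS: "finite S" using assms(4) S_def by simp
  have SX: "S \<subseteq> X" using assms(3) unfolding S_def pmfs_on_def by simp
  have D0: "\<forall>y\<in>S. 0 \<le> D y" using SX met assms(7) unfolding D_def by auto
  have w0: "\<forall>y\<in>S. 0 \<le> w y" unfolding w_def by simp
  have wpos: "\<And>y. y \<in> S \<Longrightarrow> 0 < w y" unfolding w_def S_def by (simp add: pmf_positive)
  have dyy: "\<And>y. y \<in> X \<Longrightarrow> d y y = 0" using met by auto
  obtain t where t: "feas S w D \<epsilon> t" and topt: "\<forall>s. feas S w D \<epsilon> s \<longrightarrow> (\<Sum>y\<in>S. s y) \<le> (\<Sum>y\<in>S. t y)"
    using lp_opt[OF finS w0 D0 assms(6)] by blast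
  define V where "V = (\<Sum>y\<in>S. t y)"
  have upper: "pmf \<nu> x \<le> V" if \<nu>: "\<nu> \<in> wball X d \<nu>hat \<epsilon>" for \<nu>
  proof (rule field_le_epsilon)
    fix \<eta> :: real assume \<eta>: "0 < \<eta>"
    define K where "K = (\<Sum>y\<in>S. if D y = 0 then 0 else 1 / D y)"
    have K0: "0 \<le> K" unfolding K_def using D0 by (intro sum_nonneg) auto
    define \<delta> where "\<delta> = \<eta> / (K + 1)"
    have \<delta>0: "0 < \<delta>" unfolding \<delta>_def using \<eta> K0 by simp
    have \<delta>K: "\<delta> * K \<le> \<eta>" unfolding \<delta>_def using \<eta> K0 by (simp add: field_simps)
    have "wasserstein d \<nu> \<nu>hat \<le> ennreal \<epsilon>" using \<nu> unfolding wball_def by simp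
    also have "\<dots> < ennreal (\<epsilon> + \<delta>)" using \<delta>0 assms(6) by (simp add: ennreal_less_iff)
    finally obtain \<gamma> where \<gamma>: "\<gamma> \<in> couplings \<nu> \<nu>hat"
      and c\<gamma>: "(\<integral>\<^sup>+ p. ennreal (d (fst p) (snd p)) \<partial>measure_pmf \<gamma>) < ennreal (\<epsilon> + \<delta>)"
      unfolding wasserstein_def by (auto simp: INF_less_iff)
    have m1: "map_pmf fst \<gamma> = \<nu>" and m2: "map_pmf snd \<gamma> = \<nu>hat" using \<gamma> unfolding couplings_def by auto
    define r where "r = (\<lambda>y. pmf \<gamma> (x, y))"
    have pr: "pmf \<nu> x = (\<Sum>y\<in>S. r y)" unfolding r_def S_def using coupling_mass[OF m1 m2 assms(4)] .
    have rw: "\<forall>y\<in>S. 0 \<le> r y \<and> r y \<le> w y" unfolding r_def w_def using coupling_le[OF m2] by auto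
    have "(\<Sum>y\<in>S. ennreal (d x y) * ennreal (pmf \<gamma> (x, y))) < ennreal (\<epsilon> + \<delta>)"
      using coupling_cost[OF finS, of d x \<gamma>] c\<gamma> by (rule le_less_trans)
    also have "(\<Sum>y\<in>S. ennreal (d x y) * ennreal (pmf \<gamma> (x, y))) = ennreal (\<Sum>y\<in>S. r y * D y)"
    proof -
      have "(\<Sum>y\<in>S. ennreal (d x y) * ennreal (pmf \<gamma> (x, y))) = (\<Sum>y\<in>S. ennreal (r y * D y))"
        using D0 unfolding r_def D_def by (intro sum.cong refl) (simp add: ennreal_mult mult.commute)
      also have "\<dots> = ennreal (\<Sum>y\<in>S. r y * D y)" using D0 rw by (intro sum_ennreal) auto
      finally show ?thesis .
    qed
    finally have rc: "(\<Sum>y\<in>S. r y * D y) < \<epsilon> + \<delta>"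
      using \<delta>0 assms(6) by (subst (asm) ennreal_less_iff) (auto intro!: sum_nonneg simp: D0 rw)
    define lam where "lam = \<epsilon> / (\<epsilon> + \<delta>)"
    have lam: "0 \<le> lam" "lam \<le> 1" "(1 - lam) * (\<epsilon> + \<delta>) = \<delta>" "lam * (\<epsilon> + \<delta>) = \<epsilon>"
      unfolding lam_def using \<delta>0 assms(6) by (auto simp: field_simps)
    define r' where "r' = (\<lambda>y. if D y = 0 then r y else lam * r y)"
    have "feas S w D \<epsilon> r'"
      unfolding feas_def
    proof (intro conjI ballI)
      fix y assume "y \<in> S"
      thus "0 \<le> r' y" "r' y \<le> w y" unfolding r'_def using rw lam
        by (auto intro: order_trans[OF mult_left_le_one_le])
    next
      have "(\<Sum>y\<in>S. r' y * D y) = (\<Sum>y\<in>S. lam * (r y * D y))"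
        unfolding r'_def by (intro sum.cong) auto
      also have "\<dots> = lam * (\<Sum>y\<in>S. r y * D y)" by (simp add: sum_distrib_left)
      also have "\<dots> \<le> lam * (\<epsilon> + \<delta>)" using rc lam by (intro mult_left_mono) auto
      finally show "(\<Sum>y\<in>S. r' y * D y) \<le> \<epsilon>" using lam by simp
    qed
    hence r'V: "(\<Sum>y\<in>S. r' y) \<le> V" using topt V_def by blast
    have diff: "(\<Sum>y\<in>S. r y - r' y) \<le> \<delta> * K"
    proof -
      have "(\<Sum>y\<in>S. r y - r' y) \<le> (\<Sum>y\<in>S. \<delta> * (if D y = 0 then 0 else 1 / D y))"
      proof (intro sum_mono)
        fix y assume y: "y \<in> S"
        show "r y - r' y \<le> \<delta> * (if D y = 0 then 0 else 1 / D y)"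
        proof (cases "D y = 0")
          case True thus ?thesis unfolding r'_def by simp
        next
          case False
          hence Dp: "D y > 0" using D0 y by force
          have "r y * D y \<le> (\<Sum>y\<in>S. r y * D y)"
            using y finS D0 rw by (intro member_le_sum) auto
          hence "r y * D y \<le> \<epsilon> + \<delta>" using rc by simp
          hence "(1 - lam) * (r y * D y) \<le> (1 - lam) * (\<epsilon> + \<delta>)" using lam by (intro mult_left_mono) auto
          hence "((1 - lam) * r y) * D y \<le> \<delta>" using lam by (simp add: mult.assoc)
          hence "(1 - lam) * r y \<le> \<delta> / D y" using Dp by (simp add: pos_le_divide_eq)
          thus ?thesis unfolding r'_def using False by (simp add: algebra_simps)
        qed
      qed
      also have "\<dots> = \<delta> * K" unfolding K_def by (simp add: sum_distrib_left)
      finally show ?thesis .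
    qed
    have "pmf \<nu> x = (\<Sum>y\<in>S. r' y) + (\<Sum>y\<in>S. r y - r' y)" using pr by (simp add: sum_subtractf)
    also have "\<dots> \<le> V + \<eta>" using r'V diff \<delta>K by linarith
    finally show "pmf \<nu> x \<le> V + \<eta>" .
  qed
  define p where "p = (\<lambda>y. t y / w y)"
  have p01: "0 \<le> p y" "p y \<le> 1" if "y \<in> S" for y
    using t that wpos[OF that] unfolding feas_def p_def by auto
  define g where "g = (\<lambda>y. map_pmf (\<lambda>b. (if b then x else y, y)) (bernoulli_pmf (p y)))"
  define \<gamma>s where "\<gamma>s = bind_pmf \<nu>hat g"
  define \<nu>s where "\<nu>s = map_pmf fst \<gamma>s"
  have m2: "map_pmf snd \<gamma>s = \<nu>hat"
    unfolding \<gamma>s_def g_def by (simp add: map_bind_pmf map_pmf_comp bind_return_pmf')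
  have cpl: "\<gamma>s \<in> couplings \<nu>s \<nu>hat" unfolding couplings_def \<nu>s_def using m2 by simp
  have inner: "(\<integral>\<^sup>+ q. ennreal (d (fst q) (snd q)) \<partial>measure_pmf (g y)) = ennreal (t y * D y) * ennreal (1 / w y)"
    if y: "y \<in> S" for y
  proof -
    have "(\<integral>\<^sup>+ q. ennreal (d (fst q) (snd q)) \<partial>measure_pmf (g y))
        = ennreal (d x y) * ennreal (p y) + ennreal (d y y) * ennreal (1 - p y)"
      unfolding g_def using p01[OF y] by simp
    also have "\<dots> = ennreal (d x y * p y)" using dyy y SX D0 p01[OF y] unfolding D_def
      by (auto simp: ennreal_mult)
    also have "d x y * p y = t y * D y * (1 / w y)" unfolding p_def D_def by simp
    also have "ennreal \<dots> = ennreal (t y * D y) * ennreal (1 / w y)"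
      using t y D0 wpos[OF y] unfolding feas_def by (intro ennreal_mult) auto
    finally show ?thesis .
  qed
  have cost: "(\<integral>\<^sup>+ q. ennreal (d (fst q) (snd q)) \<partial>measure_pmf \<gamma>s) \<le> ennreal \<epsilon>"
  proof -
    have "(\<integral>\<^sup>+ q. ennreal (d (fst q) (snd q)) \<partial>measure_pmf \<gamma>s)
        = (\<integral>\<^sup>+ y. (\<integral>\<^sup>+ q. ennreal (d (fst q) (snd q)) \<partial>measure_pmf (g y)) \<partial>measure_pmf \<nu>hat)"
      unfolding \<gamma>s_def by simp
    also have "\<dots> = (\<Sum>y\<in>S. (\<integral>\<^sup>+ q. ennreal (d (fst q) (snd q)) \<partial>measure_pmf (g y)) * ennreal (w y))"
      unfolding S_def w_def using assms(4) by (intro nn_integral_measure_pmf_finite) auto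
    also have "\<dots> = (\<Sum>y\<in>S. ennreal (t y * D y))"
    proof (intro sum.cong refl)
      fix y assume y: "y \<in> S"
      have "ennreal (1 / w y) * ennreal (w y) = ennreal (1 / w y * w y)"
        using wpos[OF y] by (intro ennreal_mult[symmetric]) auto
      also have "1 / w y * w y = 1" using wpos[OF y] by simp
      finally have e1: "ennreal (1 / w y) * ennreal (w y) = 1" by simp
      show "(\<integral>\<^sup>+ q. ennreal (d (fst q) (snd q)) \<partial>measure_pmf (g y)) * ennreal (w y) = ennreal (t y * D y)"
        using inner[OF y] e1 by (simp add: mult.assoc)
    qed
    also have "\<dots> = ennreal (\<Sum>y\<in>S. t y * D y)" using t D0 unfolding feas_def by (intro sum_ennreal) auto
    also have "\<dots> \<le> ennreal \<epsilon>" using t unfolding feas_def by (intro ennreal_leI) auto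
    finally show ?thesis .
  qed
  have wsv: "wasserstein d \<nu>s \<nu>hat \<le> ennreal \<epsilon>"
    unfolding wasserstein_def using cpl cost by (meson INF_lower2)
  have setv: "set_pmf \<nu>s \<subseteq> S \<union> {x}"
    unfolding \<nu>s_def \<gamma>s_def g_def S_def by auto
  have inball: "\<nu>s \<in> wball X d \<nu>hat \<epsilon>"
    unfolding wball_def pmfs_on_def using setv SX assms(7) wsv by auto
  have lower: "V \<le> pmf \<nu>s x"
  proof -
    have "\<nu>s = bind_pmf \<nu>hat (\<lambda>y. map_pmf fst (g y))" unfolding \<nu>s_def \<gamma>s_def by (simp add: map_bind_pmf)
    hence "pmf \<nu>s x = (\<integral>y. pmf (map_pmf fst (g y)) x \<partial>measure_pmf \<nu>hat)" by (simp add: pmf_bind)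
    also have "\<dots> = (\<Sum>y\<in>S. pmf \<nu>hat y *\<^sub>R pmf (map_pmf fst (g y)) x)"
      unfolding S_def using assms(4) by (intro integral_measure_pmf) auto
    also have "\<dots> \<ge> (\<Sum>y\<in>S. t y)"
    proof (intro sum_mono)
      fix y assume y: "y \<in> S"
      have "p y = measure (bernoulli_pmf (p y)) {True}" using p01[OF y] by (simp add: measure_pmf_single)
      also have "\<dots> \<le> measure (bernoulli_pmf (p y)) ((\<lambda>b. fst (if b then x else y, y)) -` {x})"
        by (intro measure_pmf.finite_measure_mono) auto
      also have "\<dots> = pmf (map_pmf fst (g y)) x" unfolding g_def by (simp add: map_pmf_comp pmf_map)
      finally have "w y * p y \<le> w y * pmf (map_pmf fst (g y)) x" using wpos[OF y] by simp
      moreover have "w y * p y = t y" unfolding p_def using wpos[OF y] by simp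
      ultimately show "t y \<le> pmf \<nu>hat y *\<^sub>R pmf (map_pmf fst (g y)) x" unfolding w_def by simp
    qed
    finally show ?thesis unfolding V_def .
  qed
  have sup: "(SUP \<nu>\<in>wball X d \<nu>hat \<epsilon>. pmf \<nu> x) = pmf \<nu>s x"
    using inball upper lower by (intro cSup_eq_maximum) (auto intro: order_trans)
  have "card (set_pmf \<nu>s) \<le> card (S \<union> {x})" using setv finS by (intro card_mono) auto
  also have "\<dots> \<le> card S + 1" using card_Un_le[of S "{x}"] by simp
  finally have "card (set_pmf \<nu>s) \<le> N + 1" using assms(5) S_def by simp
  thus ?thesis using inball sup setv S_def by blast
qed

end
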